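(* Let $w\in G(e,e,n)$. Define matrices $w_n,w_{n-1},\dots,w_1$ recursively: $w_n=w$; for $i$ from $n$ down to $2$, let $c_i$ be the unique column index with $a_i:=w_i[i,c_i]\neq 0$, and let $w_{i-1}$ be the $(i-1)\times(i-1)$ matrix obtained from $w_i$ by deleting row $i$ and column $c_i$ and then multiplying the first column of the resulting matrix by $a_i$. For $2\le i\le n$ put $L_i=i-c_i$ if $a_i=1$; $L_i=i-1$ if $a_i\neq 1$ and $c_i=1$; $L_i=i+c_i-2$ if $a_i\neq1$ and $c_i\ge 2$. Then $\ell(w)=\sum_{i=2}^n L_i$. Moreover, a reduced expression of $w$ over $X$ is given by the concatenation $R_2R_3\cdots R_n$, where (writing $s_2:=t_0$) $R_i=s_i s_{i-1}\cdots s_{c_i+1}$ if $a_i=1$ (empty if $c_i=i$), and if $a_i=\zeta_e^{k}$ with $k\not\equiv 0$: $R_i=s_i\cdots s_3\,t_k$ if $c_i=1$, $R_i=s_i\cdots s_3\,t_k t_0$ if $c_i=2$, $R_i=s_i\cdots s_3\,t_kt_0\,s_3\cdots s_{c_i}$ if $c_i\ge 3$.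
   Context: Let $e\ge 2$, $n\ge 2$ be integers, $\zeta_e=e^{2\pi i/e}$, and $\mu_e$ the group of $e$-th roots of unity. $G(e,e,n)$ is the group of $n\times n$ monomial matrices (exactly one nonzero entry in each row and column) with nonzero entries in $\mu_e$ whose product of nonzero entries is $1$. For $w$ a matrix, $w[i,c]$ is its $(i,c)$ entry. For $i\in\mathbb{Z}/e\mathbb{Z}$, $t_i\in G(e,e,n)$ is the matrix with $(1,2)$ entry $\zeta_e^{-i}$, $(2,1)$ entry $\zeta_e^{i}$, $(j,j)$ entry $1$ for $3\le j\le n$, all other entries $0$. For $3\le j\le n$, $s_j$ is the permutation matrix of the transposition exchanging $j-1$ and $j$. The set $X=\{t_0,\dots,t_{e-1},s_3,\dots,s_n\}$ generates $G(e,e,n)$, and $\ell(w)$ denotes the minimal number of elements of $X$ whose product is $w$; a reduced expression is a word over $X$ of length $\ell(w)$ representing $w$. *)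

theory Defs
  imports Complex_Main
begin

text \<open>Square matrices of size n are functions nat => nat => complex, indexed by
  1..n (rows and columns), and equal to 0 outside the index square.\<close>

type_synonym cmat = "nat \<Rightarrow> nat \<Rightarrow> complex"

definition zeta :: "nat \<Rightarrow> complex" where
  "zeta e = cis (2 * pi / real e)"

definition mat_mult :: "nat \<Rightarrow> cmat \<Rightarrow> cmat \<Rightarrow> cmat" where
  "mat_mult n A B = (\<lambda>i j. if i \<in> {1..n} \<and> j \<in> {1..n}
      then (\<Sum>k=1..n. A i k * B k j) else 0)"

definition ident :: "nat \<Rightarrow> cmat" where
  "ident n = (\<lambda>i j. if i \<in> {1..n} \<and> i = j then 1 else 0)"

definition word_eval :: "nat \<Rightarrow> cmat list \<Rightarrow> cmat" where
  "word_eval n ws = foldr (mat_mult n) ws (ident n)"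

definition Geen :: "nat \<Rightarrow> nat \<Rightarrow> cmat set" where
  "Geen e n = {w.
     (\<forall>i j. \<not> (i \<in> {1..n} \<and> j \<in> {1..n}) \<longrightarrow> w i j = 0) \<and>
     (\<forall>i\<in>{1..n}. \<exists>!j. j \<in> {1..n} \<and> w i j \<noteq> 0) \<and>
     (\<forall>j\<in>{1..n}. \<exists>!i. i \<in> {1..n} \<and> w i j \<noteq> 0) \<and>
     (\<forall>i j. w i j \<noteq> 0 \<longrightarrow> w i j ^ e = 1) \<and>
     (\<Prod>p\<in>{p\<in>{1..n}\<times>{1..n}. w (fst p) (snd p) \<noteq> 0}. w (fst p) (snd p)) = 1}"

definition tgen :: "nat \<Rightarrow> nat \<Rightarrow> int \<Rightarrow> cmat" where
  "tgen e n k = (\<lambda>r c.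
     if r = 1 \<and> c = 2 then zeta e powi (- k)
     else if r = 2 \<and> c = 1 then zeta e powi k
     else if 3 \<le> r \<and> r \<le> n \<and> r = c then 1 else 0)"

definition sgen :: "nat \<Rightarrow> nat \<Rightarrow> cmat" where
  "sgen n j = (\<lambda>r c.
     if r \<in> {1..n} \<and> c \<in> {1..n} \<and>
        c = (if r = j - 1 then j else if r = j then j - 1 else r) then 1 else 0)"

definition Xgens :: "nat \<Rightarrow> nat \<Rightarrow> cmat set" where
  "Xgens e n = {tgen e n (int k) | k. k < e} \<union> {sgen n j | j. 3 \<le> j \<and> j \<le> n}"

definition len :: "nat \<Rightarrow> nat \<Rightarrow> cmat \<Rightarrow> nat" where
  "len e n w = (LEAST k. \<exists>ws. set ws \<subseteq> Xgens e n \<and> length ws = k \<and> word_eval n ws = w)"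

definition reduced_expr :: "nat \<Rightarrow> nat \<Rightarrow> cmat \<Rightarrow> cmat list \<Rightarrow> bool" where
  "reduced_expr e n w ws \<longleftrightarrow>
     set ws \<subseteq> Xgens e n \<and> word_eval n ws = w \<and> length ws = len e n w"

definition colidx :: "nat \<Rightarrow> cmat \<Rightarrow> nat" where
  "colidx i M = (THE c. c \<in> {1..i} \<and> M i c \<noteq> 0)"

definition reduce :: "nat \<Rightarrow> cmat \<Rightarrow> cmat" where
  "reduce i M = (let c = colidx i M; a = M i c in
     (\<lambda>r q. if r \<in> {1..i-1} \<and> q \<in> {1..i-1}
        then M r (if q < c then q else q + 1) * (if q = 1 then a else 1) else 0))"

fun down :: "cmat \<Rightarrow> nat \<Rightarrow> nat \<Rightarrow> cmat" where
  "down w n 0 = w"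
| "down w n (Suc d) = reduce (n - d) (down w n d)"

definition wi :: "cmat \<Rightarrow> nat \<Rightarrow> nat \<Rightarrow> cmat" where
  "wi w n i = down w n (n - i)"

definition ci :: "cmat \<Rightarrow> nat \<Rightarrow> nat \<Rightarrow> nat" where
  "ci w n i = colidx i (wi w n i)"

definition ai :: "cmat \<Rightarrow> nat \<Rightarrow> nat \<Rightarrow> complex" where
  "ai w n i = wi w n i i (ci w n i)"

definition Li :: "cmat \<Rightarrow> nat \<Rightarrow> nat \<Rightarrow> nat" where
  "Li w n i = (if ai w n i = 1 then i - ci w n i
               else if ci w n i = 1 then i - 1
               else i + ci w n i - 2)"

definition kexp :: "nat \<Rightarrow> complex \<Rightarrow> nat" where
  "kexp e a = (THE k. k < e \<and> zeta e ^ k = a)"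

definition sg :: "nat \<Rightarrow> nat \<Rightarrow> nat \<Rightarrow> cmat" where
  "sg e n j = (if j = 2 then tgen e n 0 else sgen n j)"

definition Ri :: "nat \<Rightarrow> cmat \<Rightarrow> nat \<Rightarrow> nat \<Rightarrow> cmat list" where
  "Ri e w n i = (let c = ci w n i; a = ai w n i; k = int (kexp e a);
                     pre = map (sg e n) (rev [3..<i+1]) in
     if a = 1 then map (sg e n) (rev [c+1..<i+1])
     else if c = 1 then pre @ [tgen e n k]
     else if c = 2 then pre @ [tgen e n k, tgen e n 0]
     else pre @ [tgen e n k, tgen e n 0] @ map (sg e n) [3..<c+1])"

end

theory Submission
  imports Defs
begin

definition mnm :: "nat \<Rightarrow> (nat \<Rightarrow> nat) \<Rightarrow> (nat \<Rightarrow> complex) \<Rightarrow> cmat" where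
  "mnm n s x = (\<lambda>r c. if r \<in> {1..n} \<and> c = s r then x r else 0)"

definition tr :: "nat \<Rightarrow> nat \<Rightarrow> nat \<Rightarrow> nat" where
  "tr a b r = (if r = a then b else if r = b then a else r)"

lemma mult_mnm:
  assumes "s ` {1..n} \<subseteq> {1..n}" "t ` {1..n} \<subseteq> {1..n}"
  shows "mat_mult n (mnm n s x) (mnm n t y) = mnm n (t \<circ> s) (\<lambda>r. x r * y (s r))"
proof (rule ext, rule ext)
  fix r c
  show "mat_mult n (mnm n s x) (mnm n t y) r c = mnm n (t \<circ> s) (\<lambda>r. x r * y (s r)) r c"
  proof (cases "r \<in> {1..n}")
    case True
    then have sr: "s r \<in> {1..n}" using assms(1) by (meson image_subset_iff)
    then have tsr: "t (s r) \<in> {1..n}" using assms(2) by (meson image_subset_iff)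
    have "(\<Sum>k=1..n. mnm n s x r k * mnm n t y k c) = (\<Sum>k=1..n. if k = s r then x r * (if c = t k then y k else 0) else 0)"
      by (rule sum.cong) (use True in \<open>auto simp: mnm_def\<close>)
    also have "\<dots> = x r * (if c = t (s r) then y (s r) else 0)"
      using sr by (simp add: sum.delta')
    finally have eq: "(\<Sum>k=1..n. mnm n s x r k * mnm n t y k c) = (if c = t (s r) then x r * y (s r) else 0)"
      by simp
    show ?thesis
    proof (cases "c \<in> {1..n}")
      case True2: True
      have rhs: "mnm n (t \<circ> s) (\<lambda>r. x r * y (s r)) r c = (if c = t (s r) then x r * y (s r) else 0)"
        using True by (simp add: mnm_def)
      have lhs: "mat_mult n (mnm n s x) (mnm n t y) r c = (\<Sum>k=1..n. mnm n s x r k * mnm n t y k c)"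
        using True True2 unfolding mat_mult_def by simp
      show ?thesis using lhs rhs eq by simp
    next
      case False
      then show ?thesis using tsr by (auto simp: mat_mult_def mnm_def)
    qed
  next
    case False
    have "mat_mult n (mnm n s x) (mnm n t y) r c = 0" using False by (auto simp: mat_mult_def)
    moreover have "mnm n (t \<circ> s) (\<lambda>r. x r * y (s r)) r c = 0" using False by (auto simp: mnm_def)
    ultimately show ?thesis by simp
  qed
qed

lemma ident_mnm: "ident n = mnm n id (\<lambda>_. 1)"
  by (auto simp: ident_def mnm_def fun_eq_iff)

lemma mnm_cong:
  assumes "\<And>r. r \<in> {1..n} \<Longrightarrow> s r = s' r \<and> x r = x' r"
  shows "mnm n s x = mnm n s' x'"
  using assms by (auto simp: mnm_def fun_eq_iff)

lemma mnm_eqD: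
  assumes "mnm n s x = mnm n s' x'" "r \<in> {1..n}" "x r \<noteq> 0"
  shows "s r = s' r \<and> x r = x' r"
proof -
  have "mnm n s x r (s r) = mnm n s' x' r (s r)" using assms(1) by simp
  then have a: "s r = s' r" using assms by (auto simp: mnm_def split: if_splits)
  have "mnm n s x r (s r) = mnm n s' x' r (s r)" using assms(1) by simp
  then show ?thesis using a assms by (auto simp: mnm_def)
qed

lemma mm_assoc: "mat_mult n (mat_mult n A B) C = mat_mult n A (mat_mult n B C)"
proof (rule ext, rule ext)
  fix i j
  show "mat_mult n (mat_mult n A B) C i j = mat_mult n A (mat_mult n B C) i j"
  proof (cases "i \<in> {1..n} \<and> j \<in> {1..n}")
    case True
    have "mat_mult n (mat_mult n A B) C i j = (\<Sum>k=1..n. (\<Sum>l=1..n. A i l * B l k) * C k j)"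
      using True by (auto simp: mat_mult_def intro!: sum.cong)
    also have "\<dots> = (\<Sum>k=1..n. \<Sum>l=1..n. A i l * B l k * C k j)"
      by (simp add: sum_distrib_right)
    also have "\<dots> = (\<Sum>l=1..n. \<Sum>k=1..n. A i l * B l k * C k j)"
      by (rule sum.swap)
    also have "\<dots> = (\<Sum>l=1..n. A i l * (\<Sum>k=1..n. B l k * C k j))"
      by (simp add: sum_distrib_left mult.assoc)
    also have "\<dots> = mat_mult n A (mat_mult n B C) i j"
      using True by (auto simp: mat_mult_def intro!: sum.cong)
    finally show ?thesis .
  next
    case False then show ?thesis by (auto simp: mat_mult_def)
  qed
qed

definition zo :: "nat \<Rightarrow> cmat \<Rightarrow> bool" where
  "zo n B \<longleftrightarrow> (\<forall>i j. \<not> (i \<in> {1..n} \<and> j \<in> {1..n}) \<longrightarrow> B i j = 0)"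

lemma zo_mm: "zo n (mat_mult n A B)" by (simp add: zo_def mat_mult_def)
lemma zo_ident: "zo n (ident n)" by (simp add: zo_def ident_def)

lemma ident_left: assumes "zo n B" shows "mat_mult n (ident n) B = B"
proof (rule ext, rule ext)
  fix i j
  show "mat_mult n (ident n) B i j = B i j"
  proof (cases "i \<in> {1..n} \<and> j \<in> {1..n}")
    case True
    have "(\<Sum>k=1..n. ident n i k * B k j) = (\<Sum>k=1..n. if k = i then B i j else 0)"
      by (rule sum.cong) (auto simp: ident_def True)
    then show ?thesis using True by (simp add: mat_mult_def)
  next
    case False then show ?thesis using assms by (auto simp: mat_mult_def zo_def)
  qed
qed

lemma foldr_mm: "zo n B \<Longrightarrow> foldr (mat_mult n) xs B = mat_mult n (foldr (mat_mult n) xs (ident n)) B"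
proof (induction xs)
  case Nil then show ?case by (simp add: ident_left)
next
  case (Cons a xs) then show ?case by (simp add: mm_assoc)
qed

lemma zo_we: "zo n (word_eval n ys)"
  by (cases ys) (auto simp: word_eval_def zo_mm zo_ident)

lemma word_eval_append: "word_eval n (xs @ ys) = mat_mult n (word_eval n xs) (word_eval n ys)"
  unfolding word_eval_def using foldr_mm[OF zo_we[of n ys, unfolded word_eval_def]] by simp

lemma word_eval_Cons: "word_eval n (g # ws) = mat_mult n g (word_eval n ws)"
  by (simp add: word_eval_def)

lemma tr_range: "a \<in> {1..n} \<Longrightarrow> b \<in> {1..n} \<Longrightarrow> tr a b ` {1..n} \<subseteq> {1..n}"
  by (auto simp: tr_def)

lemma tgen_mnm: "n \<ge> 2 \<Longrightarrow> tgen e n k = mnm n (tr 1 2)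
   (\<lambda>r. if r = 1 then zeta e powi (-k) else if r = 2 then zeta e powi k else 1)"
  by (auto simp: tgen_def mnm_def tr_def fun_eq_iff)

lemma sgen_mnm: "2 \<le> j \<Longrightarrow> j \<le> n \<Longrightarrow> sgen n j = mnm n (tr (j-1) j) (\<lambda>_. 1)"
  by (auto simp: sgen_def mnm_def tr_def fun_eq_iff)

lemma sg_mnm: "2 \<le> j \<Longrightarrow> j \<le> n \<Longrightarrow> sg e n j = mnm n (tr (j-1) j) (\<lambda>_. 1)"
  by (auto simp: sg_def sgen_mnm tgen_mnm cong: if_cong)

definition rk :: "(nat \<Rightarrow> nat) \<Rightarrow> nat \<Rightarrow> nat \<Rightarrow> nat" where
  "rk s i v = card {l\<in>{1..i}. s l \<le> v}"
definition cnt :: "(nat \<Rightarrow> nat) \<Rightarrow> nat \<Rightarrow> nat" where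
  "cnt s i = rk s i (s i)"
definition Lf :: "nat \<Rightarrow> nat \<Rightarrow> bool \<Rightarrow> nat" where
  "Lf i c b = (if b then i - c else if c = 1 then i - 1 else i + c - 2)"
definition av :: "(nat \<Rightarrow> nat) \<Rightarrow> (nat \<Rightarrow> complex) \<Rightarrow> nat \<Rightarrow> complex" where
  "av s x i = (if cnt s i = 1 then inverse (\<Prod>l\<in>{1..<i}. x l) else x i)"
definition FF :: "nat \<Rightarrow> (nat \<Rightarrow> nat) \<Rightarrow> (nat \<Rightarrow> complex) \<Rightarrow> nat" where
  "FF n s x = (\<Sum>i=2..n. Lf i (cnt s i) (av s x i = 1))"

lemma tr_tr[simp]: "tr a b (tr a b x) = x" by (simp add: tr_def)

lemma tr_img: "tr a b ` B = {x. tr a b x \<in> B}"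
proof (rule set_eqI)
  fix x show "x \<in> tr a b ` B \<longleftrightarrow> x \<in> {x. tr a b x \<in> B}"
    by (metis (no_types, lifting) image_iff mem_Collect_eq tr_tr)
qed

lemma tr_inj: "inj_on (tr a b) B"
  by (metis inj_on_inverseI tr_tr)

lemma card_tr:
  assumes "\<And>x. (tr a b x \<in> I) = (x \<in> I)"
  shows "card {l\<in>I. P (tr a b l)} = card {l\<in>I. P l}"
proof -
  have "{l\<in>I. P (tr a b l)} = tr a b ` {l\<in>I. P l}"
    unfolding tr_img using assms by auto
  then show ?thesis using tr_inj card_image by metis
qed

lemma prod_tr:
  assumes "\<And>x. (tr a b x \<in> I) = (x \<in> I)"
  shows "(\<Prod>l\<in>I. f (tr a b l)) = (\<Prod>l\<in>I. f l)"
proof -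
  have "tr a b ` I = I" unfolding tr_img using assms by auto
  then have "(\<Prod>l\<in>I. f l) = (\<Prod>l\<in>tr a b ` I. f l)" by simp
  also have "\<dots> = (\<Prod>l\<in>I. f (tr a b l))" by (simp add: prod.reindex tr_inj)
  finally show ?thesis by simp
qed

lemma cnt_le: "cnt s i \<le> i"
proof -
  have "card {l\<in>{1..i}. s l \<le> s i} \<le> card {1..i}" by (rule card_mono) auto
  then show ?thesis by (simp add: cnt_def rk_def)
qed

lemma cnt_ge: "1 \<le> i \<Longrightarrow> 1 \<le> cnt s i"
proof -
  assume "1 \<le> i"
  then have "i \<in> {l\<in>{1..i}. s l \<le> s i}" by simp
  then have "card {l\<in>{1..i}. s l \<le> s i} > 0" by (subst card_gt_0_iff) auto
  then show ?thesis by (simp add: cnt_def rk_def)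
qed

lemma pair_arith:
  fixes A B j :: nat assumes "3 \<le> j" "A \<le> j-2" "B \<le> j-2"
  shows "Lf (j-1) (B+1) (if B = 0 then p else v) + Lf j (A + (if d then 0 else 1) + 1) (if A + (if d then 0 else 1) = 0 then pv else u)
    \<le> Lf (j-1) (A+1) (if A = 0 then p else u) + Lf j (B + (if d then 1 else 0) + 1) (if B + (if d then 1 else 0) = 0 then pu else v) + 1"
  using assms unfolding Lf_def
  by (cases d; cases "A = 0"; cases "B = 0"; cases p; cases u; cases v; simp)

lemma card_ins1: fixes m k :: nat assumes "m < k" shows "card (insert k {l\<in>{1..m}. P l}) = card {l\<in>{1..m}. P l} + 1"
proof -
  have f: "finite {l\<in>{1..m}. P l}" by (rule finite_subset[where B="{1..m}"]) auto
  have "k \<notin> {l\<in>{1..m}. P l}" using assms by simp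
  then show ?thesis using card_insert_disjoint[OF f] by simp
qed
lemma card_ins2: fixes m k k' :: nat assumes "m < k" "m < k'" "k \<noteq> k'"
  shows "card (insert k (insert k' {l\<in>{1..m}. P l})) = card {l\<in>{1..m}. P l} + 2"
proof -
  have f: "finite (insert k' {l\<in>{1..m}. P l})" by (rule finite_subset[where B="insert k' {1..m}"]) auto
  have "k \<notin> insert k' {l\<in>{1..m}. P l}" using assms by simp
  then show ?thesis using card_insert_disjoint[OF f] card_ins1[OF assms(2)] by simp
qed

lemma sum_two: "finite A \<Longrightarrow> a \<in> A \<Longrightarrow> b \<in> A \<Longrightarrow> a \<noteq> b \<Longrightarrow>
   sum f A = f a + f b + sum f (A - {a, b})"
proof -
  assume A: "finite A" "a \<in> A" "b \<in> A" "a \<noteq> b"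
  have "sum f A = f a + sum f (A - {a})" using A by (simp add: sum.remove)
  also have "sum f (A - {a}) = f b + sum f (A - {a} - {b})" using A by (simp add: sum.remove)
  also have "A - {a} - {b} = A - {a, b}" by auto
  finally show ?thesis by (simp add: add.assoc)
qed

lemma FF_swap:
  assumes j: "3 \<le> j" "j \<le> n" and inj: "inj_on s {1..n}"
  shows "FF n (s \<circ> tr (j-1) j) (x \<circ> tr (j-1) j) \<le> FF n s x + 1"
proof -
  define t where "t = tr (j-1) j"
  define s' where "s' = s \<circ> t"
  define x' where "x' = x \<circ> t"
  have tlow: "\<And>l. l \<le> j - 2 \<Longrightarrow> t l = l" using j by (auto simp: t_def tr_def)
  have thigh: "\<And>l. l > j \<Longrightarrow> t l = l" using j by (auto simp: t_def tr_def)
  have tj1: "t (j-1) = j" and tj: "t j = j - 1" by (auto simp: t_def tr_def)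
  have same: "cnt s' i = cnt s i \<and> av s' x' i = av s x i" if i: "i \<in> {2..n} - {j-1, j}" for i
  proof (cases "i < j - 1")
    case True
    have c: "cnt s' i = cnt s i"
      unfolding cnt_def rk_def s'_def using True tlow
      by (intro arg_cong[where f=card]) auto
    have p: "(\<Prod>l\<in>{1..<i}. x' l) = (\<Prod>l\<in>{1..<i}. x l)"
      unfolding x'_def using True tlow by (intro prod.cong) auto
    have "x' i = x i" unfolding x'_def using True tlow by simp
    then show ?thesis using c p by (simp add: av_def)
  next
    case False
    then have ij: "i > j" using i by auto
    have mem1: "\<And>y. (tr (j-1) j y \<in> {1..i}) = (y \<in> {1..i})"
      using ij j by (auto simp: tr_def)
    have mem2: "\<And>y. (tr (j-1) j y \<in> {1..<i}) = (y \<in> {1..<i})"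
      using ij j by (auto simp: tr_def)
    have "cnt s' i = card {l\<in>{1..i}. s (t l) \<le> s i}"
      unfolding cnt_def rk_def s'_def using thigh[OF ij] by simp
    also have "\<dots> = cnt s i" unfolding cnt_def rk_def t_def
      by (rule card_tr) (rule mem1)
    finally have c: "cnt s' i = cnt s i" .
    have p: "(\<Prod>l\<in>{1..<i}. x' l) = (\<Prod>l\<in>{1..<i}. x l)"
      unfolding x'_def t_def comp_def by (rule prod_tr) (rule mem2)
    have "x' i = x i" unfolding x'_def using thigh[OF ij] by simp
    then show ?thesis using c p by (simp add: av_def)
  qed
  define A where "A = card {l\<in>{1..j-2}. s l \<le> s (j-1)}"
  define B where "B = card {l\<in>{1..j-2}. s l \<le> s j}"
  define d where "d = (s (j-1) < s j)"
  define P where "P = (\<Prod>l\<in>{1..<j-1}. x l)"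
  have Ale: "A \<le> j - 2" unfolding A_def
    using card_mono[of "{1..j-2}" "{l\<in>{1..j-2}. s l \<le> s (j-1)}"] by (simp add: subset_iff)
  have Ble: "B \<le> j - 2" unfolding B_def
    using card_mono[of "{1..j-2}" "{l\<in>{1..j-2}. s l \<le> s j}"] by (simp add: subset_iff)
  have m1: "j-1 \<in> {1..n}" and m2: "j \<in> {1..n}" using j by auto
  have neq: "s (j-1) \<noteq> s j" using inj_onD[OF inj _ m1 m2] j by auto
  have c1: "cnt s (j-1) = A + 1"
  proof -
    have seq: "{l\<in>{1..j-1}. s l \<le> s (j-1)} = insert (j-1) {l\<in>{1..j-2}. s l \<le> s (j-1)}"
      using j by auto
    show ?thesis unfolding cnt_def rk_def seq A_def by (rule card_ins1) (use j in simp)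
  qed
  have c2: "cnt s j = B + (if d then 1 else 0) + 1"
  proof (cases d)
    case True
    have seq: "{l\<in>{1..j}. s l \<le> s j} = insert j (insert (j-1) {l\<in>{1..j-2}. s l \<le> s j})"
      using j True unfolding d_def by auto
    show ?thesis unfolding cnt_def rk_def seq B_def using True j card_ins2[of "j-2" j "j-1"] by simp
  next
    case False
    have seq: "{l\<in>{1..j}. s l \<le> s j} = insert j {l\<in>{1..j-2}. s l \<le> s j}"
      using j False neq unfolding d_def
      apply auto
      subgoal for x by (cases "x = j - 1") auto
      done
    show ?thesis unfolding cnt_def rk_def seq B_def using False j card_ins1[of "j-2" j] by simp
  qed
  have c1': "cnt s' (j-1) = B + 1"
  proof -
    have seq: "{l\<in>{1..j-1}. s' l \<le> s' (j-1)} = insert (j-1) {l\<in>{1..j-2}. s l \<le> s j}"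
      using j tlow tj1 unfolding s'_def by auto
    show ?thesis unfolding cnt_def rk_def seq B_def by (rule card_ins1) (use j in simp)
  qed
  have c2': "cnt s' j = A + (if d then 0 else 1) + 1"
  proof (cases d)
    case True
    have seq: "{l\<in>{1..j}. s' l \<le> s' j} = insert j {l\<in>{1..j-2}. s l \<le> s (j-1)}"
      using j True tlow tj1 tj unfolding d_def s'_def
      apply auto
      subgoal for x by (cases "x = j - 1") auto
      subgoal for x by (cases "x = j - 1") auto
      done
    show ?thesis unfolding cnt_def rk_def seq A_def using True j card_ins1[of "j-2" j] by simp
  next
    case False
    have seq: "{l\<in>{1..j}. s' l \<le> s' j} = insert j (insert (j-1) {l\<in>{1..j-2}. s l \<le> s (j-1)})"
      using j False neq tlow tj1 tj unfolding d_def s'_def by auto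
    show ?thesis unfolding cnt_def rk_def seq A_def using False j card_ins2[of "j-2" j "j-1"] by simp
  qed
  have Pj: "(\<Prod>l\<in>{1..<j}. x l) = P * x (j-1)"
    unfolding P_def using j prod.atLeastLessThan_Suc[of 1 "j-1" x] by (simp add: Suc_diff_Suc)
  have P': "(\<Prod>l\<in>{1..<j-1}. x' l) = P"
    unfolding P_def x'_def using tlow by (intro prod.cong) auto
  have Pj': "(\<Prod>l\<in>{1..<j}. x' l) = P * x j"
    using j prod.atLeastLessThan_Suc[of 1 "j-1" x'] P' tj1 unfolding x'_def
    by (simp add: Suc_diff_Suc)
  have a1: "(av s x (j-1) = 1) = (if A = 0 then inverse P = 1 else x (j-1) = 1)"
    unfolding av_def c1 P_def by simp
  have a2: "(av s x j = 1) = (if B + (if d then 1 else 0) = 0 then inverse (P * x (j-1)) = 1 else x j = 1)"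
    unfolding av_def c2 Pj by simp
  have a1': "(av s' x' (j-1) = 1) = (if B = 0 then inverse P = 1 else x j = 1)"
    unfolding av_def c1' P' using tj1 by (simp add: x'_def)
  have a2': "(av s' x' j = 1) = (if A + (if d then 0 else 1) = 0 then inverse (P * x j) = 1 else x (j-1) = 1)"
    unfolding av_def c2' Pj' using tj by (simp add: x'_def)
  have mem: "j - 1 \<in> {2..n}" "j \<in> {2..n}" "j - 1 \<noteq> j" using j by auto
  let ?g = "\<lambda>i. Lf i (cnt s i) (av s x i = 1)"
  let ?g' = "\<lambda>i. Lf i (cnt s' i) (av s' x' i = 1)"
  define R where "R = {2..n} - {j-1, j}"
  have e1: "FF n s' x' = ?g' (j-1) + ?g' j + sum ?g' R"
    unfolding FF_def R_def by (rule sum_two) (use mem in auto)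
  have e2: "sum ?g' R = sum ?g R"
    unfolding R_def using same by (intro sum.cong) auto
  have e3: "?g' (j-1) + ?g' j \<le> ?g (j-1) + ?g j + 1"
    unfolding c1 c2 c1' c2' a1 a2 a1' a2' by (rule pair_arith[OF j(1) Ale Ble])
  have e4: "FF n s x = ?g (j-1) + ?g j + sum ?g R"
    unfolding FF_def R_def by (rule sum_two) (use mem in auto)
  have "FF n s' x' \<le> FF n s x + 1" using e1 e2 e3 e4 by linarith
  then show ?thesis unfolding s'_def x'_def t_def .
qed

lemma Lf21: "Lf 2 1 b = 1" by (simp add: Lf_def)
lemma Lf2le: "c \<le> 2 \<Longrightarrow> Lf 2 c b \<le> 2" by (auto simp: Lf_def)

lemma FF_t:
  assumes n: "2 \<le> n" and inj: "inj_on s {1..n}" and y: "y 1 * y 2 = 1" "\<And>r. r \<ge> 3 \<Longrightarrow> y r = 1"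
  shows "FF n (s \<circ> tr 1 2) (\<lambda>r. y r * x (tr 1 2 r)) \<le> FF n s x + 1"
proof -
  define t where "t = tr 1 (2::nat)"
  define s' where "s' = s \<circ> t"
  define x' where "x' = (\<lambda>r. y r * x (t r))"
  have same: "cnt s' i = cnt s i \<and> av s' x' i = av s x i" if i: "i \<in> {3..n}" for i
  proof -
    have mem1: "\<And>z. (tr 1 2 z \<in> {1..i}) = (z \<in> {1..i})" using i by (auto simp: tr_def)
    have mem2: "\<And>z. (tr 1 2 z \<in> {1..<i}) = (z \<in> {1..<i})" using i by (auto simp: tr_def)
    have ti: "t i = i" using i by (auto simp: t_def tr_def)
    have "cnt s' i = card {l\<in>{1..i}. s (t l) \<le> s i}"
      unfolding cnt_def rk_def s'_def using ti by simp
    also have "\<dots> = cnt s i" unfolding cnt_def rk_def t_def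
      by (rule card_tr) (rule mem1)
    finally have c: "cnt s' i = cnt s i" .
    have py: "(\<Prod>l\<in>{1..<i}. y l) = 1"
    proof -
      have "(\<Prod>l\<in>{1..<i}. y l) = y 1 * (y 2 * (\<Prod>l\<in>{3..<i}. y l))"
        using i prod.atLeast_Suc_lessThan[of 1 i y] prod.atLeast_Suc_lessThan[of 2 i y]
        by (simp add: numeral_2_eq_2 numeral_3_eq_3)
      also have "(\<Prod>l\<in>{3..<i}. y l) = 1" using y(2) by (intro prod.neutral) auto
      finally show ?thesis using y(1) by (simp add: mult.assoc[symmetric])
    qed
    have px: "(\<Prod>l\<in>{1..<i}. x (t l)) = (\<Prod>l\<in>{1..<i}. x l)"
      unfolding t_def by (rule prod_tr) (rule mem2)
    have p: "(\<Prod>l\<in>{1..<i}. x' l) = (\<Prod>l\<in>{1..<i}. x l)"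
      unfolding x'_def prod.distrib py px by simp
    have "x' i = x i" unfolding x'_def using ti y(2)[of i] i by simp
    then show ?thesis using c p by (simp add: av_def)
  qed
  have one: "cnt s 2 = 1 \<or> cnt s' 2 = 1"
  proof -
    have e12: "{1..2::nat} = {1,2}" by auto
    have m1: "(1::nat) \<in> {1..n}" and m2: "(2::nat) \<in> {1..n}" using n by auto
    have neq: "s 1 \<noteq> s 2" using inj_onD[OF inj _ m1 m2] by auto
    show ?thesis
    proof (cases "s 1 < s 2")
      case True
      have "{l\<in>{1..2}. s' l \<le> s' 2} = {2}" unfolding e12 s'_def t_def using True by (auto simp: tr_def)
      then show ?thesis by (simp add: cnt_def rk_def)
    next
      case False
      have "{l\<in>{1..2}. s l \<le> s 2} = {2}" unfolding e12 using False neq by auto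
      then show ?thesis by (simp add: cnt_def rk_def)
    qed
  qed
  have le2: "cnt s 2 \<le> 2" "cnt s' 2 \<le> 2" using cnt_le by auto
  have g2: "Lf 2 (cnt s' 2) (av s' x' 2 = 1) \<le> Lf 2 (cnt s 2) (av s x 2 = 1) + 1"
    using one le2 Lf21 Lf2le by (metis add_le_mono1 le_add2 one_add_one)
  have "FF n s' x' = Lf 2 (cnt s' 2) (av s' x' 2 = 1) + (\<Sum>i=3..n. Lf i (cnt s' i) (av s' x' i = 1))"
    unfolding FF_def using sum.atLeast_Suc_atMost[OF n] by (simp add: numeral_3_eq_3 numeral_2_eq_2)
  also have "(\<Sum>i=3..n. Lf i (cnt s' i) (av s' x' i = 1)) = (\<Sum>i=3..n. Lf i (cnt s i) (av s x i = 1))"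
    using same by (intro sum.cong) auto
  also have "FF n s x = Lf 2 (cnt s 2) (av s x 2 = 1) + (\<Sum>i=3..n. Lf i (cnt s i) (av s x i = 1))"
    unfolding FF_def using sum.atLeast_Suc_atMost[OF n] by (simp add: numeral_3_eq_3 numeral_2_eq_2)
  ultimately have "FF n s' x' \<le> FF n s x + 1" using g2 by linarith
  then show ?thesis unfolding s'_def x'_def t_def .
qed

lemma FF_id: "FF n id (\<lambda>_. 1) = 0"
proof -
  have "Lf i (cnt id i) (av id (\<lambda>_. 1) i = 1) = 0" if "i \<in> {2..n}" for i
  proof -
    have "cnt id i = i" unfolding cnt_def rk_def
      by (metis (no_types, lifting) atLeastAtMost_iff card_atLeastAtMost diff_Suc_1 id_apply mem_Collect_eq set_eqI)
    then show ?thesis using that by (simp add: Lf_def av_def)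
  qed
  then show ?thesis unfolding FF_def by simp
qed

lemma FF_cong:
  assumes "\<And>r. r \<in> {1..n} \<Longrightarrow> s r = s' r \<and> x r = x' r"
  shows "FF n s x = FF n s' x'"
proof -
  have "cnt s i = cnt s' i \<and> av s x i = av s' x' i" if i: "i \<in> {2..n}" for i
  proof -
    have c: "cnt s i = cnt s' i" unfolding cnt_def rk_def using assms i
      by (intro arg_cong[where f=card]) auto
    have p: "(\<Prod>l\<in>{1..<i}. x l) = (\<Prod>l\<in>{1..<i}. x' l)" using assms i by (intro prod.cong) auto
    have "x i = x' i" using assms i by auto
    then show ?thesis using c p by (simp add: av_def)
  qed
  then show ?thesis unfolding FF_def by (intro sum.cong) auto
qed


lemma zeta_nz[simp]: "zeta e \<noteq> 0" by (simp add: zeta_def)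

lemma tr_img_eq: "a \<in> {1..n} \<Longrightarrow> b \<in> {1..n} \<Longrightarrow> tr a b ` {1..n} = {1..n}"
  unfolding tr_img by (auto simp: tr_def)

lemma step_inj:
  assumes "a \<in> {1..n}" "b \<in> {1..n}" "inj_on s {1..n}"
  shows "inj_on (s \<circ> tr a b) {1..n}"
proof -
  have eq: "tr a b ` {1..n} = {1..n}" using tr_img_eq assms by blast
  show ?thesis
  proof (rule comp_inj_on)
    show "inj_on (tr a b) {1..n}" by (rule tr_inj)
    show "inj_on s (tr a b ` {1..n})" unfolding eq by (rule assms(3))
  qed
qed

lemma step_range:
  assumes "a \<in> {1..n}" "b \<in> {1..n}" "s ` {1..n} \<subseteq> {1..n}"
  shows "(s \<circ> tr a b) ` {1..n} \<subseteq> {1..n}"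
proof -
  have eq: "tr a b ` {1..n} = {1..n}" using tr_img_eq assms by blast
  have "(s \<circ> tr a b) ` {1..n} = s ` {1..n}" by (simp only: image_comp[symmetric] eq)
  then show ?thesis using assms by simp
qed

lemma word_lb:
  assumes "set ws \<subseteq> Xgens e n" "2 \<le> n"
  shows "\<exists>s x. word_eval n ws = mnm n s x \<and> s ` {1..n} \<subseteq> {1..n} \<and> inj_on s {1..n}
     \<and> (\<forall>r\<in>{1..n}. x r \<noteq> 0) \<and> FF n s x \<le> length ws"
  using assms(1)
proof (induction ws)
  case Nil
  have "word_eval n [] = mnm n (\<lambda>r. r) (\<lambda>_. 1)" by (simp add: word_eval_def ident_mnm id_def)
  moreover have "FF n (\<lambda>r. r) (\<lambda>_. 1) = 0" using FF_id[of n] by (simp add: id_def)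
  ultimately show ?case by (intro exI[of _ "\<lambda>r. r"] exI[of _ "\<lambda>_. 1"]) auto
next
  case (Cons g ws)
  then obtain s x where sx: "word_eval n ws = mnm n s x" "s ` {1..n} \<subseteq> {1..n}" "inj_on s {1..n}"
     "\<forall>r\<in>{1..n}. x r \<noteq> 0" "FF n s x \<le> length ws" by auto
  have g: "g \<in> Xgens e n" using Cons.prems by simp
  then consider (t) k where "g = tgen e n (int k)" | (s) j where "3 \<le> j" "j \<le> n" "g = sgen n j"
    unfolding Xgens_def by blast
  then show ?case
  proof cases
    case t
    define y where "y = (\<lambda>r::nat. if r = 1 then zeta e powi (- int k) else if r = 2 then zeta e powi (int k) else 1)"
    have m: "(1::nat) \<in> {1..n}" "(2::nat) \<in> {1..n}" using assms(2) by auto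
    have gm: "g = mnm n (tr 1 2) y" unfolding t y_def using tgen_mnm[OF assms(2)] by simp
    have ev: "word_eval n (g # ws) = mnm n (s \<circ> tr 1 2) (\<lambda>r. y r * x (tr 1 2 r))"
      unfolding word_eval_Cons gm sx(1) by (rule mult_mnm[OF tr_range[OF m] sx(2)])
    have y12: "y 1 * y 2 = 1" unfolding y_def by (simp add: power_int_minus)
    have y3: "\<And>r. r \<ge> 3 \<Longrightarrow> y r = 1" unfolding y_def by auto
    have ynz: "\<And>r. y r \<noteq> 0" unfolding y_def by auto
    have xnz: "\<forall>r\<in>{1..n}. y r * x (tr 1 2 r) \<noteq> 0"
      using sx(4) tr_img_eq[OF m] ynz by auto
    have "FF n (s \<circ> tr 1 2) (\<lambda>r. y r * x (tr 1 2 r)) \<le> length (g # ws)"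
      using FF_t[OF assms(2) sx(3) y12 y3, of x] sx(5) by simp
    then show ?thesis
      using ev step_range[OF m sx(2)] step_inj[OF m sx(3)] xnz by blast
  next
    case s
    have m: "j - 1 \<in> {1..n}" "j \<in> {1..n}" using s by auto
    have gm: "g = mnm n (tr (j-1) j) (\<lambda>_. 1)" using s sgen_mnm by simp
    have ev: "word_eval n (g # ws) = mnm n (s \<circ> tr (j-1) j) (x \<circ> tr (j-1) j)"
      unfolding word_eval_Cons gm sx(1) mult_mnm[OF tr_range[OF m] sx(2)] by (simp add: comp_def)
    have xnz: "\<forall>r\<in>{1..n}. (x \<circ> tr (j-1) j) r \<noteq> 0"
      using sx(4) tr_img_eq[OF m] by auto
    have "FF n (s \<circ> tr (j-1) j) (x \<circ> tr (j-1) j) \<le> length (g # ws)"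
      using FF_swap[OF s(1,2) sx(3), of x] sx(5) by simp
    then show ?thesis
      using ev step_range[OF m sx(2)] step_inj[OF m sx(3)] xnz by blast
  qed
qed

lemma geen_mnm:
  assumes "w \<in> Geen e n"
  shows "\<exists>s x. w = mnm n s x \<and> s ` {1..n} \<subseteq> {1..n} \<and> inj_on s {1..n}
     \<and> (\<forall>r\<in>{1..n}. x r \<noteq> 0 \<and> x r ^ e = 1) \<and> (\<Prod>r\<in>{1..n}. x r) = 1"
proof -
  have all: "(\<forall>i j. \<not> (i \<in> {1..n} \<and> j \<in> {1..n}) \<longrightarrow> w i j = 0) \<and>
     (\<forall>i\<in>{1..n}. \<exists>!j. j \<in> {1..n} \<and> w i j \<noteq> 0) \<and>
     (\<forall>j\<in>{1..n}. \<exists>!i. i \<in> {1..n} \<and> w i j \<noteq> 0) \<and>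
     (\<forall>i j. w i j \<noteq> 0 \<longrightarrow> w i j ^ e = 1) \<and>
     (\<Prod>p\<in>{p\<in>{1..n}\<times>{1..n}. w (fst p) (snd p) \<noteq> 0}. w (fst p) (snd p)) = 1"
    using assms unfolding Geen_def by (rule CollectD)
  have z: "\<And>i j. \<not> (i \<in> {1..n} \<and> j \<in> {1..n}) \<Longrightarrow> w i j = 0"
    using all[THEN conjunct1] by blast
  have row: "\<And>i. i \<in> {1..n} \<Longrightarrow> \<exists>!j. j \<in> {1..n} \<and> w i j \<noteq> 0"
    using all by (elim conjE) (erule bspec)
  have col: "\<And>j. j \<in> {1..n} \<Longrightarrow> \<exists>!i. i \<in> {1..n} \<and> w i j \<noteq> 0"
    using all by (elim conjE) (erule bspec)
  have pw: "\<And>i j. w i j \<noteq> 0 \<Longrightarrow> w i j ^ e = 1"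
    using all[THEN conjunct2, THEN conjunct2, THEN conjunct2, THEN conjunct1] by blast
  have pr: "(\<Prod>p\<in>{p\<in>{1..n}\<times>{1..n}. w (fst p) (snd p) \<noteq> 0}. w (fst p) (snd p)) = 1"
    using all by (elim conjE)
  define s where "s r = (THE c. c \<in> {1..n} \<and> w r c \<noteq> 0)" for r
  define x where "x r = w r (s r)" for r
  have sP: "s r \<in> {1..n} \<and> w r (s r) \<noteq> 0" if "r \<in> {1..n}" for r
    unfolding s_def by (rule theI'[OF row[OF that]])
  have sU: "c = s r" if "r \<in> {1..n}" "c \<in> {1..n}" "w r c \<noteq> 0" for r c
    using row[OF that(1)] sP[OF that(1)] that by blast
  have weq: "w = mnm n s x"
  proof (intro ext)
    fix r c
    show "w r c = mnm n s x r c"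
    proof (cases "r \<in> {1..n} \<and> c \<in> {1..n}")
      case True
      then show ?thesis using sU[of r c] by (auto simp: mnm_def x_def)
    next
      case False
      then show ?thesis using z[OF False] sP[of r] by (auto simp: mnm_def x_def)
    qed
  qed
  have rng: "s ` {1..n} \<subseteq> {1..n}" using sP by auto
  have inj: "inj_on s {1..n}"
  proof (rule inj_onI)
    fix a b assume ab: "a \<in> {1..n}" "b \<in> {1..n}" "s a = s b"
    show "a = b" using col[of "s a"] sP[OF ab(1)] sP[OF ab(2)] ab by metis
  qed
  have xr: "\<forall>r\<in>{1..n}. x r \<noteq> 0 \<and> x r ^ e = 1" using sP pw by (simp add: x_def)
  have pset: "{p\<in>{1..n}\<times>{1..n}. w (fst p) (snd p) \<noteq> 0} = (\<lambda>r. (r, s r)) ` {1..n}"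
  proof (rule set_eqI)
    fix p :: "nat \<times> nat"
    show "p \<in> {p\<in>{1..n}\<times>{1..n}. w (fst p) (snd p) \<noteq> 0} \<longleftrightarrow> p \<in> (\<lambda>r. (r, s r)) ` {1..n}"
    proof
      assume "p \<in> {p\<in>{1..n}\<times>{1..n}. w (fst p) (snd p) \<noteq> 0}"
      then have "fst p \<in> {1..n}" "snd p \<in> {1..n}" "w (fst p) (snd p) \<noteq> 0" by auto
      then have "snd p = s (fst p)" using sU by blast
      then show "p \<in> (\<lambda>r. (r, s r)) ` {1..n}" using \<open>fst p \<in> {1..n}\<close>
        by (intro image_eqI[where x="fst p"]) (auto simp: prod_eq_iff)
    next
      assume "p \<in> (\<lambda>r. (r, s r)) ` {1..n}"
      then obtain r where "r \<in> {1..n}" "p = (r, s r)" by auto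
      then show "p \<in> {p\<in>{1..n}\<times>{1..n}. w (fst p) (snd p) \<noteq> 0}" using sP by auto
    qed
  qed
  have "inj_on (\<lambda>r. (r, s r)) {1..n}" by (rule inj_onI) auto
  then have pp: "(\<Prod>r\<in>{1..n}. x r) = 1" using pr unfolding pset
    by (simp add: prod.reindex x_def)
  show ?thesis by (rule exI[of _ s], rule exI[of _ x]) (intro conjI weq rng inj xr pp)
qed

locale pm =
  fixes n :: nat and s :: "nat \<Rightarrow> nat" and x :: "nat \<Rightarrow> complex"
  assumes rng: "s ` {1..n} \<subseteq> {1..n}" and inj: "inj_on s {1..n}"
    and nz: "\<And>r. r \<in> {1..n} \<Longrightarrow> x r \<noteq> 0" and tot: "(\<Prod>r\<in>{1..n}. x r) = 1"
begin

lemma surj: "s ` {1..n} = {1..n}"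
  using endo_inj_surj[OF _ rng inj] by simp

lemma rk_n: assumes "r \<in> {1..n}" shows "rk s n (s r) = s r"
proof -
  have sr: "s r \<in> {1..n}" using assms rng by blast
  have "s ` {l\<in>{1..n}. s l \<le> s r} = {c\<in>s ` {1..n}. c \<le> s r}" by auto
  also have "\<dots> = {1..s r}" unfolding surj using sr by auto
  finally have "card (s ` {l\<in>{1..n}. s l \<le> s r}) = s r" by simp
  moreover have "inj_on s {l\<in>{1..n}. s l \<le> s r}" using inj by (rule inj_on_subset) auto
  ultimately show ?thesis unfolding rk_def using card_image by metis
qed

lemma rk_in: assumes "r \<in> {1..i}" shows "rk s i (s r) \<in> {1..i}"
proof -
  have "card {l\<in>{1..i}. s l \<le> s r} \<le> card {1..i}" by (rule card_mono) auto
  moreover have "card {l\<in>{1..i}. s l \<le> s r} > 0"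
    using assms by (subst card_gt_0_iff) auto
  ultimately show ?thesis unfolding rk_def by auto
qed

lemma rk_Suc: "rk s (Suc k) v = rk s k v + (if s (Suc k) \<le> v then 1 else 0)"
proof -
  have "{l\<in>{1..Suc k}. s l \<le> v} = (if s (Suc k) \<le> v then insert (Suc k) {l\<in>{1..k}. s l \<le> v} else {l\<in>{1..k}. s l \<le> v})"
    by (auto simp: le_Suc_eq)
  moreover have "card (insert (Suc k) {l\<in>{1..k}. s l \<le> v}) = card {l\<in>{1..k}. s l \<le> v} + 1"
    using card_ins1[of k "Suc k"] by simp
  ultimately show ?thesis unfolding rk_def by simp
qed

lemma rk_mono: "v \<le> v' \<Longrightarrow> rk s k v \<le> rk s k v'"
  unfolding rk_def by (rule card_mono) auto

lemma rk_strict: assumes "r \<in> {1..k}" "v < s r" shows "rk s k v < rk s k (s r)"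
  unfolding rk_def
proof (rule psubset_card_mono)
  have a: "r \<in> {l \<in> {1..k}. s l \<le> s r}" "r \<notin> {l \<in> {1..k}. s l \<le> v}" using assms by auto
  have "{l \<in> {1..k}. s l \<le> v} \<subseteq> {l \<in> {1..k}. s l \<le> s r}" using assms by auto
  then show "{l \<in> {1..k}. s l \<le> v} \<subset> {l \<in> {1..k}. s l \<le> s r}"
    using a by blast
qed auto

lemma rk_step:
  assumes i: "2 \<le> i" "i \<le> n" and r: "r \<in> {1..i-1}"
  shows "rk s i (s r) = (if rk s (i-1) (s r) < cnt s i then rk s (i-1) (s r) else rk s (i-1) (s r) + 1)"
    and "cnt s i = rk s (i-1) (s i) + 1"
proof -
  have iS: "i = Suc (i-1)" using i by simp
  have c: "cnt s i = rk s (i-1) (s i) + 1" unfolding cnt_def using rk_Suc[of "i-1" "s i"] iS by simp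
  then show "cnt s i = rk s (i-1) (s i) + 1" .
  have rn: "r \<in> {1..n}" "i \<in> {1..n}" using r i by auto
  have ne: "s r \<noteq> s i" using inj_onD[OF inj _ rn] r i by auto
  have e: "rk s i (s r) = rk s (i-1) (s r) + (if s i \<le> s r then 1 else 0)"
    using rk_Suc[of "i-1" "s r"] iS by simp
  show "rk s i (s r) = (if rk s (i-1) (s r) < cnt s i then rk s (i-1) (s r) else rk s (i-1) (s r) + 1)"
  proof (cases "s i < s r")
    case True
    have "rk s (i-1) (s i) < rk s (i-1) (s r)" by (rule rk_strict[OF r True])
    then show ?thesis using e c True by auto
  next
    case False
    then have "s r < s i" using ne by auto
    then have "rk s (i-1) (s r) \<le> rk s (i-1) (s i)" by (intro rk_mono) auto
    then show ?thesis using e c False ne by auto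
  qed
qed

definition mm :: "nat \<Rightarrow> complex" where "mm i = (\<Prod>r\<in>{Suc i..n}. x r)"

definition WF :: "nat \<Rightarrow> cmat" where
  "WF i = (\<lambda>r q. if r \<in> {1..i} \<and> q \<in> {1..i} \<and> q = rk s i (s r) then x r * (if q = 1 then mm i else 1) else 0)"

lemma mm_nz: "mm i \<noteq> 0" unfolding mm_def using nz by (auto simp: prod_zero_iff)

lemma mm_step: "1 \<le> i \<Longrightarrow> i \<le> n \<Longrightarrow> mm (i-1) = x i * mm i"
  unfolding mm_def using prod.atLeast_Suc_atMost[of i n x] by simp

lemma WF_val: assumes "r \<in> {1..i}" "q \<in> {1..i}" "r \<in> {1..n}" shows "(WF i r q \<noteq> 0) = (q = rk s i (s r))"
proof -
  show ?thesis unfolding WF_def using assms nz[OF assms(3)] mm_nz by auto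
qed

lemma colidx_WF: assumes "1 \<le> i" "i \<le> n" shows "colidx i (WF i) = cnt s i"
  unfolding colidx_def
proof (rule the_equality)
  have ci: "cnt s i \<in> {1..i}" unfolding cnt_def by (rule rk_in) (use assms in auto)
  show "cnt s i \<in> {1..i} \<and> WF i i (cnt s i) \<noteq> 0"
    using ci WF_val[of i i "cnt s i"] assms by (auto simp: cnt_def)
  show "\<And>c. c \<in> {1..i} \<and> WF i i c \<noteq> 0 \<Longrightarrow> c = cnt s i"
    using WF_val[of i i] assms by (auto simp: cnt_def)
qed

lemma reduce_WF: assumes i: "2 \<le> i" "i \<le> n" shows "reduce i (WF i) = WF (i-1)"
proof (intro ext)
  fix r q
  define c where "c = cnt s i"
  have cc: "colidx i (WF i) = c" unfolding c_def by (rule colidx_WF) (use i in auto)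
  have c1: "1 \<le> c" "c \<le> i" unfolding c_def using cnt_ge[of i s] cnt_le[of s i] i by auto
  have a: "WF i i c = x i * (if c = 1 then mm i else 1)" unfolding WF_def c_def cnt_def using c1 i
    by (auto simp: c_def cnt_def)
  have ms: "mm (i-1) = x i * mm i" using mm_step i by auto
  show "reduce i (WF i) r q = WF (i-1) r q"
  proof (cases "r \<in> {1..i-1} \<and> q \<in> {1..i-1}")
    case False
    have "reduce i (WF i) r q = 0" by (simp only: reduce_def Let_def if_not_P[OF False])
    moreover have "WF (i-1) r q = 0" using False unfolding WF_def by auto
    ultimately show ?thesis by simp
  next
    case True
    define Q where "Q = rk s (i-1) (s r)"
    have rs: "rk s i (s r) = (if Q < c then Q else Q + 1)" unfolding Q_def c_def
      using rk_step(1)[OF i, of r] True by simp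
    define q2 where "q2 = (if q < c then q else q + 1)"
    have q2r: "q2 \<in> {1..i}" using True c1 unfolding q2_def by auto
    have rr: "r \<in> {1..i}" "r \<in> {1..n}" using True i by auto
    have iff: "(q2 = rk s i (s r)) = (q = Q)" unfolding rs q2_def by auto
    have lhs: "reduce i (WF i) r q = WF i r q2 * (if q = 1 then WF i i c else 1)"
      unfolding reduce_def Let_def cc q2_def using True by simp
    show ?thesis
    proof (cases "q = Q")
      case False
      then have "WF i r q2 = 0" using WF_val[OF rr(1) q2r rr(2)] iff by simp
      moreover have "WF (i-1) r q = 0" using False True unfolding WF_def Q_def by auto
      ultimately show ?thesis using lhs by simp
    next
      case True2: True
      have w1: "WF i r q2 = x r * (if q2 = 1 then mm i else 1)"
        unfolding WF_def using rr q2r iff True2 by simp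
      have w2: "WF (i-1) r q = x r * (if q = 1 then mm (i-1) else 1)"
        unfolding WF_def using True True2 Q_def by simp
      have "reduce i (WF i) r q = x r * (if q2 = 1 then mm i else 1) * (if q = 1 then x i * (if c = 1 then mm i else 1) else 1)"
        by (simp only: lhs w1 a)
      also have "\<dots> = x r * (if q = 1 then x i * mm i else 1)"
        using c1 True unfolding q2_def by auto
      finally show ?thesis unfolding w2 ms .
    qed
  qed
qed

lemma WF_n: "WF n = mnm n s x"
proof (intro ext)
  fix r q
  have m: "mm n = 1" unfolding mm_def by simp
  show "WF n r q = mnm n s x r q"
  proof -
    have sr: "\<And>r. r \<in> {1..n} \<Longrightarrow> s r \<in> {1..n}" using rng by blast
    show ?thesis unfolding WF_def mnm_def m using rk_n sr by auto
  qed
qed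

end

lemma (in pm) down_WF: "w = mnm n s x \<Longrightarrow> d < n \<Longrightarrow> down w n d = WF (n - d)"
proof (induction d)
  case 0 then show ?case using WF_n by simp
next
  case (Suc d)
  then have "down w n (Suc d) = reduce (n - d) (WF (n - d))" by simp
  also have "\<dots> = WF (n - d - 1)" by (rule reduce_WF) (use Suc.prems in auto)
  finally show ?case by simp
qed

lemma (in pm) wi_WF: "w = mnm n s x \<Longrightarrow> 1 \<le> i \<Longrightarrow> i \<le> n \<Longrightarrow> wi w n i = WF i"
  unfolding wi_def using down_WF[of w "n - i"] by simp

lemma (in pm) ai_av: assumes "1 \<le> i" "i \<le> n"
  shows "x i * (if cnt s i = 1 then mm i else 1) = av s x i"
proof (cases "cnt s i = 1")
  case True
  have "(\<Prod>l\<in>{i..n}. x l) = x i * mm i"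
    unfolding mm_def using prod.atLeast_Suc_atMost[of i n x] assms by simp
  moreover have "(\<Prod>l\<in>{1..<i}. x l) * (\<Prod>l\<in>{i..<Suc n}. x l) = (\<Prod>l\<in>{1..<Suc n}. x l)"
    by (rule prod.atLeastLessThan_concat) (use assms in auto)
  ultimately have "(\<Prod>l\<in>{1..<i}. x l) * (x i * mm i) = 1"
    using tot by (simp add: atLeastLessThanSuc_atLeastAtMost)
  then have "inverse (\<Prod>l\<in>{1..<i}. x l) = x i * mm i" by (rule inverse_unique)
  then show ?thesis using True by (simp add: av_def)
next
  case False then show ?thesis by (simp add: av_def)
qed

lemma zeta_pow: "zeta e ^ k = cis (2 * pi * real k / real e)"
  unfolding zeta_def DeMoivre by (simp add: field_simps)

lemma kexp_prop:
  assumes e: "e \<ge> 1" and a: "a ^ e = 1"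
  shows "kexp e a < e \<and> zeta e ^ kexp e a = a"
proof -
  have b: "bij_betw (\<lambda>k. cis (2 * pi * real k / real e)) {..<e} {z. z ^ e = 1}"
    by (rule bij_betw_roots_unity) (use e in simp)
  then have "a \<in> (\<lambda>k. cis (2 * pi * real k / real e)) ` {..<e}" using a by (simp add: bij_betw_def)
  then obtain k where k: "k < e" "cis (2 * pi * real k / real e) = a" by auto
  have u: "\<And>k'. k' < e \<and> zeta e ^ k' = a \<Longrightarrow> k' = k"
  proof -
    fix k' assume h: "k' < e \<and> zeta e ^ k' = a"
    have injf: "inj_on (\<lambda>k. cis (2 * pi * real k / real e)) {..<e}" using b by (simp add: bij_betw_def)
    have eq: "cis (2 * pi * real k' / real e) = cis (2 * pi * real k / real e)" using h k by (simp add: zeta_pow)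
    have "k' \<in> {..<e}" "k \<in> {..<e}" using h k by auto
    then show "k' = k" using inj_onD[OF injf eq] by blast
  qed
  have P: "k < e \<and> zeta e ^ k = a" using k by (simp add: zeta_pow)
  have "kexp e a = k" unfolding kexp_def by (rule the_equality[where P="\<lambda>k. k < e \<and> zeta e ^ k = a", OF P u])
  then show ?thesis using k by (simp add: zeta_pow)
qed

definition dn :: "nat \<Rightarrow> nat \<Rightarrow> nat \<Rightarrow> nat" where
  "dn c i r = (if r = i then c else if c \<le> r \<and> r < i then r + 1 else r)"
definition up :: "nat \<Rightarrow> nat \<Rightarrow> nat" where
  "up c r = (if r = 2 then c else if 3 \<le> r \<and> r \<le> c then r - 1 else r)"

lemma we_nil: "word_eval n [] = mnm n (\<lambda>r. r) (\<lambda>_. 1)"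
  by (simp add: word_eval_def ident_mnm id_def)

lemma evA:
  assumes "1 \<le> c" "c \<le> i" "i \<le> n" "2 \<le> n"
  shows "word_eval n (map (sg e n) (rev [c+1..<i+1])) = mnm n (dn c i) (\<lambda>_. 1)"
  using assms(2,3)
proof (induction i rule: dec_induct)
  case base
  have "word_eval n (map (sg e n) (rev [c+1..<c+1])) = mnm n (\<lambda>r. r) (\<lambda>_. 1)" by (simp add: we_nil)
  also have "\<dots> = mnm n (dn c c) (\<lambda>_. 1)" by (rule mnm_cong) (auto simp: dn_def)
  finally show ?case .
next
  case (step k)
  have r1: "(\<lambda>r. r) ` {1..n} \<subseteq> {1..n}" by auto
  have m: "k \<in> {1..n}" "k+1 \<in> {1..n}" using step assms by auto
  have rng: "dn c k ` {1..n} \<subseteq> {1..n}" using step assms by (auto simp: dn_def)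
  have "rev [c+1..<Suc k+1] = (k+1) # rev [c+1..<k+1]" using step by simp
  then have "word_eval n (map (sg e n) (rev [c+1..<Suc k+1])) = mat_mult n (sg e n (k+1)) (mnm n (dn c k) (\<lambda>_. 1))"
    using step by (simp add: word_eval_Cons)
  also have "sg e n (k+1) = mnm n (tr k (k+1)) (\<lambda>_. 1)" using sg_mnm[of "k+1" n e] step assms by simp
  also have "mat_mult n (mnm n (tr k (k+1)) (\<lambda>_. 1)) (mnm n (dn c k) (\<lambda>_. 1)) = mnm n (dn c k \<circ> tr k (k+1)) (\<lambda>r. 1 * 1)"
    by (rule mult_mnm[OF tr_range[OF m] rng])
  also have "\<dots> = mnm n (dn c (Suc k)) (\<lambda>_. 1)"
    by (rule mnm_cong) (use step in \<open>auto simp: dn_def tr_def\<close>)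
  finally show ?case .
qed

lemma we_single: "s ` {1..n} \<subseteq> {1..n} \<Longrightarrow> word_eval n [mnm n s y] = mnm n s y"
proof -
  assume a: "s ` {1..n} \<subseteq> {1..n}"
  have "word_eval n [mnm n s y] = mat_mult n (mnm n s y) (mnm n (\<lambda>r. r) (\<lambda>_. 1))"
    by (simp add: word_eval_Cons we_nil)
  also have "\<dots> = mnm n ((\<lambda>r. r) \<circ> s) (\<lambda>r. y r * 1)" by (rule mult_mnm[OF a]) auto
  finally show ?thesis by (simp add: comp_def)
qed

lemma evB:
  assumes "2 \<le> c" "c \<le> n"
  shows "word_eval n (map (sg e n) [3..<c+1]) = mnm n (up c) (\<lambda>_. 1)"
  using assms
proof (induction c rule: dec_induct)
  case base
  have "word_eval n (map (sg e n) [3..<2+1]) = mnm n (\<lambda>r. r) (\<lambda>_. 1)" by (simp add: we_nil)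
  also have "\<dots> = mnm n (up 2) (\<lambda>_. 1)" by (rule mnm_cong) (auto simp: up_def)
  finally show ?case .
next
  case (step k)
  have m: "k \<in> {1..n}" "k+1 \<in> {1..n}" using step assms by auto
  have rng: "up k ` {1..n} \<subseteq> {1..n}" using step assms by (auto simp: up_def)
  have "[3..<Suc k+1] = [3..<k+1] @ [k+1]" using step by simp
  then have "word_eval n (map (sg e n) [3..<Suc k+1]) = mat_mult n (mnm n (up k) (\<lambda>_. 1)) (word_eval n [sg e n (k+1)])"
    using step by (simp add: word_eval_append)
  also have "sg e n (k+1) = mnm n (tr k (k+1)) (\<lambda>_. 1)" using sg_mnm[of "k+1" n e] step assms by simp
  also have "word_eval n [mnm n (tr k (k+1)) (\<lambda>_. 1)] = mnm n (tr k (k+1)) (\<lambda>_. 1)"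
    by (rule we_single[OF tr_range[OF m]])
  also have "mat_mult n (mnm n (up k) (\<lambda>_. 1)) (mnm n (tr k (k+1)) (\<lambda>_. 1)) = mnm n (tr k (k+1) \<circ> up k) (\<lambda>r. 1 * 1)"
    by (rule mult_mnm[OF rng tr_range[OF m]])
  also have "\<dots> = mnm n (up (Suc k)) (\<lambda>_. 1)"
    by (rule mnm_cong) (use step in \<open>auto simp: up_def tr_def\<close>)
  finally show ?case .
qed

lemma comp_rng: "g ` A \<subseteq> A \<Longrightarrow> f ` A \<subseteq> A \<Longrightarrow> (f \<circ> g) ` A \<subseteq> A"
  by (auto simp: image_subset_iff)

lemma dn_rng: "1 \<le> c \<Longrightarrow> c \<le> i \<Longrightarrow> i \<le> n \<Longrightarrow> dn c i ` {1..n} \<subseteq> {1..n}"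
  by (auto simp: dn_def)
lemma up_rng: "2 \<le> c \<Longrightarrow> c \<le> n \<Longrightarrow> up c ` {1..n} \<subseteq> {1..n}"
  by (auto simp: up_def)

locale pme = pm +
  fixes e :: nat
  assumes e: "e \<ge> 2" and n2: "n \<ge> 2" and pe: "\<And>r. r \<in> {1..n} \<Longrightarrow> x r ^ e = 1"
begin

definition tau :: "nat \<Rightarrow> nat \<Rightarrow> nat" where
  "tau i r = (if r \<le> i then rk s i (s r) else r)"
definition yv :: "nat \<Rightarrow> nat \<Rightarrow> complex" where
  "yv i r = (if r \<le> i then x r * (if rk s i (s r) = 1 then mm i else 1) else 1)"
definition Wm :: "nat \<Rightarrow> cmat" where
  "Wm i = mnm n (tau i) (yv i)"

lemma tau_rng: "i \<le> n \<Longrightarrow> tau i ` {1..n} \<subseteq> {1..n}"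
proof -
  assume i: "i \<le> n"
  have "tau i r \<in> {1..n}" if r: "r \<in> {1..n}" for r
  proof (cases "r \<le> i")
    case True
    then have "rk s i (s r) \<in> {1..i}" using r by (intro rk_in) auto
    then show ?thesis using True i by (auto simp: tau_def)
  next
    case False then show ?thesis using r by (auto simp: tau_def)
  qed
  then show ?thesis by auto
qed

lemma Wm_step:
  assumes i: "2 \<le> i" "i \<le> n" and rho: "rho ` {1..n} \<subseteq> {1..n}"
    and ri: "rho i = cnt s i" and zi: "z i = x i * (if cnt s i = 1 then mm i else 1)"
    and rQ: "\<And>Q. 1 \<le> Q \<Longrightarrow> Q \<le> i - 1 \<Longrightarrow> rho Q = (if Q < cnt s i then Q else Q + 1)
       \<and> (if Q = 1 then mm (i-1) else 1) * z Q = (if rho Q = 1 then mm i else 1)"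
    and rh: "\<And>r. i < r \<Longrightarrow> r \<le> n \<Longrightarrow> rho r = r \<and> z r = 1"
  shows "mat_mult n (Wm (i-1)) (mnm n rho z) = Wm i"
proof -
  have "mat_mult n (Wm (i-1)) (mnm n rho z) = mnm n (rho \<circ> tau (i-1)) (\<lambda>r. yv (i-1) r * z (tau (i-1) r))"
    unfolding Wm_def by (rule mult_mnm[OF tau_rng rho]) (use i in auto)
  also have "\<dots> = Wm i" unfolding Wm_def
  proof (rule mnm_cong)
    fix r assume r: "r \<in> {1..n}"
    consider "r < i" | "r = i" | "i < r" by linarith
    then show "(rho \<circ> tau (i-1)) r = tau i r \<and> yv (i-1) r * z (tau (i-1) r) = yv i r"
    proof cases
      case 1
      define Q where "Q = rk s (i-1) (s r)"
      have rr: "r \<in> {1..i-1}" using 1 r by auto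
      have Qr: "Q \<in> {1..i-1}" unfolding Q_def by (rule rk_in[OF rr])
      have st: "rk s i (s r) = (if Q < cnt s i then Q else Q + 1)" unfolding Q_def by (rule rk_step(1)[OF i rr])
      have t1: "tau (i-1) r = Q" unfolding tau_def Q_def using rr by simp
      have t2: "tau i r = rk s i (s r)" unfolding tau_def using 1 by simp
      have RQ: "rho Q = rk s i (s r)" using rQ[of Q] Qr st by auto
      have "yv (i-1) r * z Q = x r * ((if Q = 1 then mm (i-1) else 1) * z Q)"
        unfolding yv_def Q_def using rr by simp
      also have "\<dots> = x r * (if rk s i (s r) = 1 then mm i else 1)" using rQ[of Q] Qr RQ by auto
      also have "\<dots> = yv i r" unfolding yv_def using 1 by simp
      finally show ?thesis using t1 t2 RQ by simp
    next
      case 2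
      have nl: "\<not> i \<le> i - 1" using i by arith
      have t1: "tau (i-1) i = i" unfolding tau_def using nl by simp
      show ?thesis using 2 t1 ri zi i nl by (simp add: tau_def yv_def cnt_def)
    next
      case 3
      have nl: "\<not> r \<le> i - 1" "\<not> r \<le> i" using 3 by arith+
      show ?thesis using nl r rh[of r] 3 by (simp add: tau_def yv_def)
    qed
  qed
  finally show ?thesis .
qed

lemma Wm_n: "Wm n = mnm n s x"
  unfolding Wm_def
proof (rule mnm_cong)
  fix r assume r: "r \<in> {1..n}"
  have sr: "s r \<in> {1..n}" using r rng by blast
  have m: "mm n = 1" unfolding mm_def by simp
  show "tau n r = s r \<and> yv n r = x r" using r rk_n[OF r] m by (simp add: tau_def yv_def)
qed

lemma Wm_1: "Wm 1 = ident n"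
  unfolding Wm_def ident_mnm
proof (rule mnm_cong)
  fix r assume r: "r \<in> {1..n}"
  have rk1: "rk s 1 (s 1) = 1" unfolding rk_def
  proof -
    have "{l\<in>{1..1}. s l \<le> s 1} = {1}" by auto
    then show "card {l\<in>{1..1}. s l \<le> s 1} = 1" by simp
  qed
  have "x 1 * mm 1 = 1" unfolding mm_def using tot prod.atLeast_Suc_atMost[of 1 n x] n2 by simp
  then show "tau 1 r = id r \<and> yv 1 r = 1" using r rk1 by (auto simp: tau_def yv_def)
qed

definition Av :: "nat \<Rightarrow> complex" where "Av i = x i * (if cnt s i = 1 then mm i else 1)"

lemma ci_eq: "w = mnm n s x \<Longrightarrow> 1 \<le> i \<Longrightarrow> i \<le> n \<Longrightarrow> ci w n i = cnt s i"
  unfolding ci_def using wi_WF colidx_WF by simp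

lemma ai_eq: assumes "w = mnm n s x" "1 \<le> i" "i \<le> n" shows "ai w n i = Av i"
proof -
  have c: "cnt s i \<in> {1..i}" unfolding cnt_def by (rule rk_in) (use assms in auto)
  show ?thesis unfolding ai_def ci_eq[OF assms] wi_WF[OF assms] Av_def WF_def using c by (simp add: cnt_def)
qed

lemma Av_pow: assumes "1 \<le> i" "i \<le> n" shows "Av i ^ e = 1"
proof -
  have "mm i ^ e = 1" unfolding mm_def prod_power_distrib using pe assms by (intro prod.neutral) auto
  then show ?thesis unfolding Av_def using pe[of i] assms by (simp add: power_mult_distrib)
qed

lemma Av_nz: assumes "1 \<le> i" "i \<le> n" shows "Av i \<noteq> 0"
  unfolding Av_def using nz[of i] mm_nz assms by simp

lemma tgA: assumes "zeta e ^ k = A" "A \<noteq> 0"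
  shows "tgen e n (int k) = mnm n (tr 1 2) (\<lambda>r. if r = 1 then inverse A else if r = 2 then A else 1)"
proof -
  have a: "zeta e powi (- int k) = inverse A" by (simp only: power_int_minus power_int_of_nat assms(1))
  have b: "zeta e powi (int k) = A" by (simp only: power_int_of_nat assms(1))
  show ?thesis by (simp only: tgen_mnm[OF n2] a b)
qed

lemma tg0: "tgen e n 0 = mnm n (tr 1 2) (\<lambda>_. 1)"
  unfolding tgen_mnm[OF n2] by (rule mnm_cong) simp

lemma R_eval:
  assumes w: "w = mnm n s x" and i: "2 \<le> i" "i \<le> n"
  shows "mat_mult n (Wm (i-1)) (word_eval n (Ri e w n i)) = Wm i"
proof -
  define c where "c = cnt s i"
  define A where "A = Av i"
  define k where "k = kexp e A"
  define pre where "pre = map (sg e n) (rev [3..<i+1])"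
  have c1: "1 \<le> c" "c \<le> i" unfolding c_def using cnt_ge[of i s] cnt_le[of s i] i by auto
  have Ri: "Ri e w n i = (if A = 1 then map (sg e n) (rev [c+1..<i+1])
     else if c = 1 then pre @ [tgen e n (int k)]
     else if c = 2 then pre @ [tgen e n (int k), tgen e n 0]
     else pre @ [tgen e n (int k), tgen e n 0] @ map (sg e n) [3..<c+1])"
  proof -
    have ci: "ci w n i = cnt s i" using ci_eq[OF w] i by simp
    have ai: "ai w n i = Av i" using ai_eq[OF w] i by simp
    show ?thesis unfolding Ri_def Let_def ci ai c_def A_def k_def pre_def by (rule refl)
  qed
  have kp: "k < e \<and> zeta e ^ k = A" unfolding k_def A_def
    by (rule kexp_prop) (use e Av_pow[of i] i in auto)
  have Anz: "A \<noteq> 0" unfolding A_def using Av_nz[of i] i by simp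
  define yA where "yA = (\<lambda>r::nat. if r = 1 then inverse A else if r = 2 then A else 1)"
  have TK: "tgen e n (int k) = mnm n (tr 1 2) yA" unfolding yA_def by (rule tgA[OF kp[THEN conjunct2] Anz])
  have ms: "mm (i-1) = x i * mm i" using mm_step i by auto
  have Ac: "A = x i * (if c = 1 then mm i else 1)" unfolding A_def Av_def c_def ..
  have m12: "(1::nat) \<in> {1..n}" "(2::nat) \<in> {1..n}" using n2 by auto
  have trr: "tr 1 2 ` {1..n} \<subseteq> {1..n}" by (rule tr_range[OF m12])
  have dn2: "dn 2 i ` {1..n} \<subseteq> {1..n}" by (rule dn_rng) (use i in auto)
  have EP: "word_eval n pre = mnm n (dn 2 i) (\<lambda>_. 1)" unfolding pre_def using evA[of 2 i n e] i n2 by simp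
  have nl: "\<not> i \<le> i - 1" using i by arith
  show ?thesis
  proof (cases "A = 1")
    case True
    have E: "word_eval n (Ri e w n i) = mnm n (dn c i) (\<lambda>_. 1)" unfolding Ri using True evA[OF c1 i(2) n2] by simp
    have mm1: "mm (i-1) = (if c = 1 then 1 else mm i)" using True Ac ms by auto
    show ?thesis unfolding E
    proof (rule Wm_step[OF i dn_rng[OF c1 i(2)]])
      show "dn c i i = cnt s i" by (simp add: dn_def c_def)
      show "1 = x i * (if cnt s i = 1 then mm i else 1)" using True Ac c_def by simp
      show "\<And>Q. 1 \<le> Q \<Longrightarrow> Q \<le> i - 1 \<Longrightarrow> dn c i Q = (if Q < cnt s i then Q else Q + 1) \<and>
        (if Q = 1 then mm (i - 1) else 1) * 1 = (if dn c i Q = 1 then mm i else 1)"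
        unfolding c_def[symmetric] mm1 using c1 by (auto simp: dn_def)
      show "\<And>r. i < r \<Longrightarrow> r \<le> n \<Longrightarrow> dn c i r = r \<and> 1 = 1" by (auto simp: dn_def)
    qed
  next
    case nA: False
    show ?thesis
    proof (cases "c = 1")
      case True
      have E: "word_eval n (Ri e w n i) = mnm n (tr 1 2 \<circ> dn 2 i) (\<lambda>r. 1 * yA (dn 2 i r))"
      proof -
        have "word_eval n (Ri e w n i) = mat_mult n (word_eval n pre) (word_eval n [mnm n (tr 1 2) yA])"
          unfolding Ri using nA True TK by (simp add: word_eval_append)
        also have "\<dots> = mat_mult n (mnm n (dn 2 i) (\<lambda>_. 1)) (mnm n (tr 1 2) yA)"
          unfolding EP we_single[OF trr] ..
        also have "\<dots> = mnm n (tr 1 2 \<circ> dn 2 i) (\<lambda>r. 1 * yA (dn 2 i r))" by (rule mult_mnm[OF dn2 trr])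
        finally show ?thesis .
      qed
      have mA: "mm (i-1) = A" using True Ac ms by simp
      have inv: "A * inverse A = 1" using Anz by simp
      show ?thesis unfolding E
      proof (rule Wm_step[OF i comp_rng[OF dn2 trr]])
        show "(tr 1 2 \<circ> dn 2 i) i = cnt s i" using True i by (simp add: dn_def c_def tr_def)
        show "1 * yA (dn 2 i i) = x i * (if cnt s i = 1 then mm i else 1)"
          using True Ac i by (simp add: dn_def yA_def c_def)
        show "\<And>Q. 1 \<le> Q \<Longrightarrow> Q \<le> i - 1 \<Longrightarrow> (tr 1 2 \<circ> dn 2 i) Q = (if Q < cnt s i then Q else Q + 1) \<and>
          (if Q = 1 then mm (i - 1) else 1) * (1 * yA (dn 2 i Q)) = (if (tr 1 2 \<circ> dn 2 i) Q = 1 then mm i else 1)"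
          unfolding c_def[symmetric] mA using True inv by (auto simp: dn_def tr_def yA_def)
        show "\<And>r. i < r \<Longrightarrow> r \<le> n \<Longrightarrow> (tr 1 2 \<circ> dn 2 i) r = r \<and> 1 * yA (dn 2 i r) = 1"
          using i by (auto simp: dn_def tr_def yA_def)
      qed
    next
      case nc1: False
      have xA: "x i = A" using Ac nc1 by simp
      have inv: "x i * inverse A = 1" using Anz xA by simp
      have T2: "word_eval n [tgen e n (int k), tgen e n 0] = mnm n (tr 1 2 \<circ> tr 1 2) (\<lambda>r. yA r * 1)"
      proof -
        have "word_eval n [tgen e n (int k), tgen e n 0] = mat_mult n (mnm n (tr 1 2) yA) (word_eval n [mnm n (tr 1 2) (\<lambda>_. 1)])"
          unfolding TK tg0 by (simp add: word_eval_Cons)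
        also have "\<dots> = mnm n (tr 1 2 \<circ> tr 1 2) (\<lambda>r. yA r * 1)"
          unfolding we_single[OF trr] by (rule mult_mnm[OF trr trr])
        finally show ?thesis .
      qed
      have trtr: "(tr 1 2 \<circ> tr 1 2) ` {1..n} \<subseteq> {1..n}" by (rule comp_rng[OF trr trr])
      show ?thesis
      proof (cases "c = 2")
        case True
        have E: "word_eval n (Ri e w n i) = mnm n ((tr 1 2 \<circ> tr 1 2) \<circ> dn 2 i) (\<lambda>r. 1 * (yA (dn 2 i r) * 1))"
        proof -
          have "word_eval n (Ri e w n i) = mat_mult n (word_eval n pre) (word_eval n [tgen e n (int k), tgen e n 0])"
            unfolding Ri using nA True by (simp add: word_eval_append)
          also have "\<dots> = mnm n ((tr 1 2 \<circ> tr 1 2) \<circ> dn 2 i) (\<lambda>r. 1 * (yA (dn 2 i r) * 1))"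
            unfolding EP T2 by (rule mult_mnm[OF dn2 trtr])
          finally show ?thesis .
        qed
        show ?thesis unfolding E
        proof (rule Wm_step[OF i comp_rng[OF dn2 trtr]])
          show "((tr 1 2 \<circ> tr 1 2) \<circ> dn 2 i) i = cnt s i" using True i by (simp add: dn_def c_def tr_def)
          show "1 * (yA (dn 2 i i) * 1) = x i * (if cnt s i = 1 then mm i else 1)"
            using True xA i by (simp add: dn_def yA_def c_def)
          show "\<And>Q. 1 \<le> Q \<Longrightarrow> Q \<le> i - 1 \<Longrightarrow> ((tr 1 2 \<circ> tr 1 2) \<circ> dn 2 i) Q = (if Q < cnt s i then Q else Q + 1) \<and>
            (if Q = 1 then mm (i - 1) else 1) * (1 * (yA (dn 2 i Q) * 1)) = (if ((tr 1 2 \<circ> tr 1 2) \<circ> dn 2 i) Q = 1 then mm i else 1)"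
            unfolding c_def[symmetric] ms using True inv by (auto simp: dn_def tr_def yA_def)
          show "\<And>r. i < r \<Longrightarrow> r \<le> n \<Longrightarrow> ((tr 1 2 \<circ> tr 1 2) \<circ> dn 2 i) r = r \<and> 1 * (yA (dn 2 i r) * 1) = 1"
            using i by (auto simp: dn_def tr_def yA_def)
        qed
      next
        case nc2: False
        have c3: "3 \<le> c" using c1 nc1 nc2 by auto
        have upr: "up c ` {1..n} \<subseteq> {1..n}" by (rule up_rng) (use c3 c1 i in auto)
        have EB: "word_eval n (map (sg e n) [3..<c+1]) = mnm n (up c) (\<lambda>_. 1)"
          by (rule evB) (use c3 c1 i in auto)
        have E: "word_eval n (Ri e w n i) = mnm n ((up c \<circ> (tr 1 2 \<circ> tr 1 2)) \<circ> dn 2 i) (\<lambda>r. 1 * (yA (dn 2 i r) * 1 * 1))"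
        proof -
          have "word_eval n (Ri e w n i) = mat_mult n (word_eval n pre) (mat_mult n (word_eval n [tgen e n (int k), tgen e n 0]) (word_eval n (map (sg e n) [3..<c+1])))"
            unfolding Ri using nA nc1 nc2 by (simp only: if_False word_eval_append)
          also have "mat_mult n (word_eval n [tgen e n (int k), tgen e n 0]) (word_eval n (map (sg e n) [3..<c+1]))
              = mnm n (up c \<circ> (tr 1 2 \<circ> tr 1 2)) (\<lambda>r. yA r * 1 * 1)"
            unfolding T2 EB by (rule mult_mnm[OF trtr upr])
          also have "mat_mult n (word_eval n pre) (mnm n (up c \<circ> (tr 1 2 \<circ> tr 1 2)) (\<lambda>r. yA r * 1 * 1))
              = mnm n ((up c \<circ> (tr 1 2 \<circ> tr 1 2)) \<circ> dn 2 i) (\<lambda>r. 1 * (yA (dn 2 i r) * 1 * 1))"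
            unfolding EP by (rule mult_mnm[OF dn2 comp_rng[OF trtr upr]])
          finally show ?thesis .
        qed
        show ?thesis unfolding E
        proof (rule Wm_step[OF i comp_rng[OF dn2 comp_rng[OF trtr upr]]])
          show "((up c \<circ> (tr 1 2 \<circ> tr 1 2)) \<circ> dn 2 i) i = cnt s i" using c3 i by (simp add: dn_def c_def tr_def up_def)
          show "1 * (yA (dn 2 i i) * 1 * 1) = x i * (if cnt s i = 1 then mm i else 1)"
            using nc1 xA i by (simp add: dn_def yA_def c_def)
          show "\<And>Q. 1 \<le> Q \<Longrightarrow> Q \<le> i - 1 \<Longrightarrow> ((up c \<circ> (tr 1 2 \<circ> tr 1 2)) \<circ> dn 2 i) Q = (if Q < cnt s i then Q else Q + 1) \<and>
            (if Q = 1 then mm (i - 1) else 1) * (1 * (yA (dn 2 i Q) * 1 * 1)) = (if ((up c \<circ> (tr 1 2 \<circ> tr 1 2)) \<circ> dn 2 i) Q = 1 then mm i else 1)"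
            unfolding c_def[symmetric] ms using c3 c1 inv by (auto simp: dn_def tr_def yA_def up_def)
          show "\<And>r. i < r \<Longrightarrow> r \<le> n \<Longrightarrow> ((up c \<circ> (tr 1 2 \<circ> tr 1 2)) \<circ> dn 2 i) r = r \<and> 1 * (yA (dn 2 i r) * 1 * 1) = 1"
            using i c1 by (auto simp: dn_def tr_def yA_def up_def)
        qed
      qed
    qed
  qed
qed

end

lemma sg_X: "0 < e \<Longrightarrow> 2 \<le> j \<Longrightarrow> j \<le> n \<Longrightarrow> sg e n j \<in> Xgens e n"
  unfolding sg_def Xgens_def by (cases "j = 2") (auto intro: exI[of _ 0])

lemma tg_X: "k < e \<Longrightarrow> tgen e n (int k) \<in> Xgens e n"
  unfolding Xgens_def by auto

context pme
begin

lemma Ri_facts: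
  assumes w: "w = mnm n s x" and i: "2 \<le> i" "i \<le> n"
  shows "length (Ri e w n i) = Li w n i" and "set (Ri e w n i) \<subseteq> Xgens e n"
    and "Li w n i = Lf i (cnt s i) (av s x i = 1)"
proof -
  have ci: "ci w n i = cnt s i" using ci_eq[OF w] i by simp
  have ai: "ai w n i = Av i" using ai_eq[OF w] i by simp
  define c where "c = cnt s i"
  have c1: "1 \<le> c" "c \<le> i" unfolding c_def using cnt_ge[of i s] cnt_le[of s i] i by auto
  have kp: "kexp e (Av i) < e \<and> zeta e ^ kexp e (Av i) = Av i"
    by (rule kexp_prop) (use e Av_pow[of i] i in auto)
  show "length (Ri e w n i) = Li w n i"
    unfolding Ri_def Li_def Let_def ci ai c_def[symmetric] using c1 i by auto
  have e0: "0 < e" using e by auto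
  have T0: "tgen e n 0 \<in> Xgens e n" using tg_X[OF e0] by simp
  have TK: "tgen e n (int (kexp e (Av i))) \<in> Xgens e n" using tg_X kp by blast
  have S: "\<And>j. 2 \<le> j \<Longrightarrow> j \<le> n \<Longrightarrow> sg e n j \<in> Xgens e n" using sg_X[OF e0] by blast
  show "set (Ri e w n i) \<subseteq> Xgens e n"
    unfolding Ri_def Let_def ci ai c_def[symmetric] using c1 i T0 TK S by auto
  have "Av i = av s x i" unfolding Av_def by (rule ai_av) (use i in auto)
  then show "Li w n i = Lf i (cnt s i) (av s x i = 1)"
    unfolding Li_def Lf_def ci ai by simp
qed

lemma concat_eval:
  assumes w: "w = mnm n s x" and i: "1 \<le> i" "i \<le> n"
  shows "word_eval n (concat (map (Ri e w n) [2..<i+1])) = Wm i"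
  using i
proof (induction i rule: dec_induct)
  case base
  show ?case using Wm_1 by (simp add: word_eval_def)
next
  case (step k)
  have "[2..<Suc k + 1] = [2..<k+1] @ [Suc k]" using step by simp
  then have "word_eval n (concat (map (Ri e w n) [2..<Suc k+1])) =
      mat_mult n (word_eval n (concat (map (Ri e w n) [2..<k+1]))) (word_eval n (Ri e w n (Suc k)))"
    by (simp add: word_eval_append)
  also have "\<dots> = mat_mult n (Wm (Suc k - 1)) (word_eval n (Ri e w n (Suc k)))" using step by simp
  also have "\<dots> = Wm (Suc k)" by (rule R_eval[OF w]) (use step in auto)
  finally show ?case .
qed

end

theorem mainTheorem1:
  fixes e n :: nat and w :: cmat
  assumes "e \<ge> 2" and "n \<ge> 2" and "w \<in> Geen e n"
  shows "len e n w = (\<Sum>i=2..n. Li w n i)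
    \<and> reduced_expr e n w (concat (map (Ri e w n) [2..<n+1]))"
proof -
  obtain s x where sx: "w = mnm n s x" "s ` {1..n} \<subseteq> {1..n}" "inj_on s {1..n}"
     "\<forall>r\<in>{1..n}. x r \<noteq> 0 \<and> x r ^ e = 1" "(\<Prod>r\<in>{1..n}. x r) = 1"
    using geen_mnm[OF assms(3)] by blast
  interpret pme n s x e
    by unfold_locales (use sx assms in auto)
  define W where "W = concat (map (Ri e w n) [2..<n+1])"
  have evW: "word_eval n W = w" unfolding W_def using concat_eval[OF sx(1), of n] n2 Wm_n sx(1) by simp
  have setW: "set W \<subseteq> Xgens e n"
  proof
    fix g assume "g \<in> set W"
    then obtain i where i: "i \<in> set [2..<n+1]" "g \<in> set (Ri e w n i)" unfolding W_def by auto
    then have "2 \<le> i" "i \<le> n" by auto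
    then show "g \<in> Xgens e n" using Ri_facts(2)[OF sx(1)] i(2) by blast
  qed
  have "length W = (\<Sum>i\<leftarrow>[2..<n+1]. length (Ri e w n i))" unfolding W_def by (simp add: length_concat comp_def)
  also have "\<dots> = (\<Sum>i=2..<n+1. length (Ri e w n i))" by (simp only: sum_set_upt_conv_sum_list_nat[symmetric] set_upt)
  also have "\<dots> = (\<Sum>i=2..n. Li w n i)"
    using Ri_facts(1)[OF sx(1)] by (intro sum.cong) auto
  finally have lenW: "length W = (\<Sum>i=2..n. Li w n i)" .
  have FFL: "FF n s x = (\<Sum>i=2..n. Li w n i)"
    unfolding FF_def using Ri_facts(3)[OF sx(1)] by (intro sum.cong) auto
  have lb: "FF n s x \<le> length ws" if ws: "set ws \<subseteq> Xgens e n" "word_eval n ws = w" for ws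
  proof -
    obtain s' x' where h: "word_eval n ws = mnm n s' x'" "\<forall>r\<in>{1..n}. x' r \<noteq> 0" "FF n s' x' \<le> length ws"
      using word_lb[OF ws(1) n2] by blast
    have eq: "mnm n s' x' = mnm n s x" using h(1) ws(2) sx(1) by simp
    have "FF n s' x' = FF n s x"
      by (rule FF_cong) (use mnm_eqD[OF eq] h(2) in blast)
    then show ?thesis using h(3) by simp
  qed
  have len: "len e n w = FF n s x" unfolding len_def
  proof (rule Least_equality)
    show "\<exists>ws. set ws \<subseteq> Xgens e n \<and> length ws = FF n s x \<and> word_eval n ws = w"
      using setW lenW FFL evW by auto
    show "\<And>k. \<exists>ws. set ws \<subseteq> Xgens e n \<and> length ws = k \<and> word_eval n ws = w \<Longrightarrow> FF n s x \<le> k"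
      using lb by blast
  qed
  show ?thesis unfolding reduced_expr_def W_def[symmetric] using len FFL setW evW lenW by simp
qed

end
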